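(* Let $n\geq 2$ with $n\neq 4$. Each of the following statements is equivalent to $d_n < \sqrt{2}\,(p_n)^{1/2}$: 1. $(p_{n+1}+d_n)\,p_n$ is the largest odd multiple of $p_n$ that is at most $p_{n+1}^2$. 2. The open interval $(p_n^2, p_{n+1}^2)$ contains exactly $d_n$ odd multiples of $p_n$. 3. $\displaystyle \frac{d_n}{2} + \sum_{i=1}^{d_n-1} i < p_n$.
   Context: $p_n$ denotes the $n$th prime ($p_1=2$) and $d_n := p_{n+1}-p_n$. *)

theory Defs
  imports Complex_Main "HOL-Computational_Algebra.Primes"
begin

text \<open>p n is the n-th prime, 1-indexed: p 1 = 2, p 2 = 3, ...
  (p 0 is a junk value and never used.)\<close>
definition p :: "nat \<Rightarrow> nat" where
  "p n = (LEAST q. prime q \<and> card {r. prime r \<and> r \<le> q} = n)"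

definition d :: "nat \<Rightarrow> nat" where
  "d n = p (n + 1) - p n"

definition odd_multiples :: "nat \<Rightarrow> nat set" where
  "odd_multiples m = {x. \<exists>k. odd k \<and> x = k * m}"

end

theory Submission
  imports Defs
begin

lemma fin_pr: "finite {r::nat. prime r \<and> r \<le> x}" by (rule finite_subset[of _ "{..x}"]) auto
lemma ex_nth: "n \<ge> 1 \<Longrightarrow> \<exists>q::nat. prime q \<and> card {r. prime r \<and> r \<le> q} = n"
proof (induction n rule: dec_induct)
  case base
  have "{r::nat. prime r \<and> r \<le> 2} = {2}"
    by (auto dest: prime_ge_2_nat)
  thus ?case by (intro exI[of _ 2]) auto
next
  case (step m)
  then obtain q :: nat where q: "prime q" "card {r. prime r \<and> r \<le> q} = m" by blast
  define q' where "q' = (LEAST r::nat. prime r \<and> q < r)"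
  obtain b :: nat where "prime b" "q < b" using bigger_prime by blast
  hence "prime q' \<and> q < q'" unfolding q'_def by (rule LeastI[of "\<lambda>r. prime r \<and> q < r" b, OF conjI])
  hence q': "prime q'" "q < q'" by auto
  have nl: "\<not> (prime r \<and> q < r)" if "r < q'" for r using not_less_Least[of r "\<lambda>r. prime r \<and> q < r"] that unfolding q'_def by simp
  have "{r. prime r \<and> r \<le> q'} = insert q' {r. prime r \<and> r \<le> q}"
  proof (intro equalityI subsetI)
    fix r assume "r \<in> {r. prime r \<and> r \<le> q'}"
    hence r: "prime r" "r \<le> q'" by auto
    show "r \<in> insert q' {r. prime r \<and> r \<le> q}"
    proof (cases "r = q'")
      case False
      hence "r < q'" using r by simp
      hence rq: "r < q'" .
      have "r \<le> q" using nl[OF rq] r(1) by (auto simp: not_less)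
      thus ?thesis using r by simp
    qed simp
  next
    fix r assume "r \<in> insert q' {r. prime r \<and> r \<le> q}"
    thus "r \<in> {r. prime r \<and> r \<le> q'}" using q' by auto
  qed
  hence "card {r. prime r \<and> r \<le> q'} = Suc m" using q' q fin_pr by simp
  thus ?case using q' by auto
qed


lemma gsum: "2 * (\<Sum>i=1..m. real i) = real m * (real m + 1)"
  by (induction m) (auto simp: algebra_simps)

lemma arith_main:
  fixes q d :: nat
  assumes oq: "odd q" and ed: "even d" and dp: "d > 0"
  shows "((real d < sqrt 2 * sqrt (real q)) \<longleftrightarrow>
           ((q + d + d) * q \<in> odd_multiples q \<inter> {..(q + d) ^ 2} \<and>
            (\<forall>x \<in> odd_multiples q \<inter> {..(q + d) ^ 2}. x \<le> (q + d + d) * q))) \<and>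
         ((real d < sqrt 2 * sqrt (real q)) \<longleftrightarrow>
           card (odd_multiples q \<inter> {q ^ 2 <..< (q + d) ^ 2}) = d) \<and>
         ((real d < sqrt 2 * sqrt (real q)) \<longleftrightarrow>
           real d / 2 + (\<Sum>i = 1..d - 1. real i) < real q)"
proof -
  have qp: "q > 0" using oq by (cases q) auto
  have sq: "(q+d)^2 = q*q + 2*q*d + d*d" by (simp add: power2_eq_square algebra_simps)
  have ne: "d*d \<noteq> 2*q"
  proof
    assume h: "d*d = 2*q"
    obtain c where "d = 2*c" using ed by blast
    with h have "q = 2*(c*c)" by simp
    with oq show False by simp
  qed
  have K: "(real d < sqrt 2 * sqrt (real q)) \<longleftrightarrow> d*d < 2*q"
  proof -
    have "sqrt 2 * sqrt (real q) = sqrt (2 * real q)" by (simp add: real_sqrt_mult)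
    moreover have "real d = sqrt (real d ^ 2)" by simp
    ultimately have "(real d < sqrt 2 * sqrt (real q)) \<longleftrightarrow> real d ^ 2 < 2 * real q"
      by (metis real_sqrt_less_iff)
    also have "\<dots> \<longleftrightarrow> real (d*d) < real (2*q)" by (simp add: power2_eq_square)
    finally show ?thesis by linarith
  qed
  have S3: "(real d / 2 + (\<Sum>i = 1..d - 1. real i) < real q) \<longleftrightarrow> d*d < 2*q"
  proof -
    have "2 * (\<Sum>i = 1..d - 1. real i) = real (d-1) * (real (d-1) + 1)" by (rule gsum)
    also have "\<dots> = real d * real d - real d" using dp by (simp add: of_nat_diff algebra_simps)
    finally have e: "real d / 2 + (\<Sum>i = 1..d - 1. real i) = real (d*d) / 2" by simp
    have "real (d*d) / 2 < real q \<longleftrightarrow> real (d*d) < real (2*q)" by linarith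
    also have "\<dots> \<longleftrightarrow> d*d < 2*q" by (rule of_nat_less_iff)
    finally show ?thesis unfolding e .
  qed
  have mem: "(q + d + d) * q \<in> odd_multiples q \<inter> {..(q + d) ^ 2}"
  proof -
    have "odd (q+d+d)" using oq ed by simp
    moreover have "(q+d+d)*q \<le> (q+d)^2" unfolding sq by (simp add: algebra_simps)
    ultimately show ?thesis unfolding odd_multiples_def by blast
  qed
  have S1: "(\<forall>x \<in> odd_multiples q \<inter> {..(q + d) ^ 2}. x \<le> (q + d + d) * q) \<longleftrightarrow> d*d < 2*q"
  proof
    assume h: "\<forall>x \<in> odd_multiples q \<inter> {..(q + d) ^ 2}. x \<le> (q + d + d) * q"
    show "d*d < 2*q"
    proof (rule ccontr)
      assume "\<not> d*d < 2*q"
      hence "2*q \<le> d*d" by simp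
      hence "(q+d+d+2)*q \<le> (q+d)^2" unfolding sq by (simp add: algebra_simps)
      moreover have "odd (q+d+d+2)" using oq ed by simp
      ultimately have "(q+d+d+2)*q \<in> odd_multiples q \<inter> {..(q + d) ^ 2}"
        unfolding odd_multiples_def by blast
      with h have "(q+d+d+2)*q \<le> (q + d + d) * q" by blast
      with qp show False by simp
    qed
  next
    assume h: "d*d < 2*q"
    show "\<forall>x \<in> odd_multiples q \<inter> {..(q + d) ^ 2}. x \<le> (q + d + d) * q"
    proof
      fix x assume "x \<in> odd_multiples q \<inter> {..(q + d) ^ 2}"
      then obtain k where k: "odd k" "x = k*q" "k*q \<le> (q+d)^2" unfolding odd_multiples_def by auto
      have "k*q < (q+d+d+2)*q" using k(3) h unfolding sq by (simp add: algebra_simps)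
      hence "k < q+d+d+2" using mult_less_cancel2 by blast
      hence "k \<le> q+d+d" using k(1) oq ed by presburger
      thus "x \<le> (q + d + d) * q" using k(2) by simp
    qed
  qed
  define S where "S = odd_multiples q \<inter> {q ^ 2 <..< (q + d) ^ 2}"
  have injf: "inj_on (\<lambda>j. (q+2*j)*q) A" for A using qp by (auto simp: inj_on_def)
  have sub: "(\<lambda>j. (q+2*j)*q) ` {1..m} \<subseteq> S" if "q * 2 * m < 2*q*d + d*d" for m
  proof
    fix x assume "x \<in> (\<lambda>j. (q+2*j)*q) ` {1..m}"
    then obtain j where j: "1 \<le> j" "j \<le> m" "x = (q+2*j)*q" by auto
    have "q*2*j \<le> q*2*m" using j(2) by simp
    moreover have "x = q*q + q*2*j" using j(3) by (simp add: algebra_simps)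
    ultimately have "x < (q+d)^2" using that unfolding sq by linarith
    moreover have "q^2 < x" using j qp by (simp add: power2_eq_square algebra_simps)
    moreover have "x \<in> odd_multiples q" using j oq unfolding odd_multiples_def
      by (intro CollectI exI[of _ "q+2*j"]) simp
    ultimately show "x \<in> S" unfolding S_def by auto
  qed
  have finS: "finite S" unfolding S_def by (rule finite_subset[of _ "{..<(q+d)^2}"]) auto
  have S2: "card S = d \<longleftrightarrow> d*d < 2*q"
  proof
    assume "card S = d"
    show "d*d < 2*q"
    proof (rule ccontr)
      assume "\<not> d*d < 2*q"
      with ne have "2*q < d*d" by simp
      hence "q * 2 * (d+1) < 2*q*d + d*d" by (simp add: algebra_simps)
      from sub[OF this] have "card ((\<lambda>j. (q+2*j)*q) ` {1..d+1}) \<le> card S"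
        using finS card_mono by blast
      with injf[of "{1..d+1}"] have "d+1 \<le> card S" by (simp add: card_image)
      with \<open>card S = d\<close> show False by simp
    qed
  next
    assume h: "d*d < 2*q"
    have "S = (\<lambda>j. (q+2*j)*q) ` {1..d}"
    proof
      have "q * 2 * d < 2*q*d + d*d" using dp by simp
      thus "(\<lambda>j. (q+2*j)*q) ` {1..d} \<subseteq> S" by (rule sub)
    next
      show "S \<subseteq> (\<lambda>j. (q+2*j)*q) ` {1..d}"
      proof
        fix x assume "x \<in> S"
        then obtain k where k: "odd k" "x = k*q" "q^2 < k*q" "k*q < (q+d)^2"
          unfolding S_def odd_multiples_def by auto
        have "k*q < (q+d+d+2)*q" using k(4) h unfolding sq by (simp add: algebra_simps)
        hence k1: "k < q+d+d+2" using mult_less_cancel2 by blast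
        have "q*q < k*q" using k(3) by (simp add: power2_eq_square)
        hence k2: "q < k" using mult_less_cancel2 by blast
        have "k = q + 2*((k-q) div 2) \<and> 1 \<le> (k-q) div 2 \<and> (k-q) div 2 \<le> d"
          using k1 k2 k(1) oq ed by presburger
        then obtain j where j: "k = q + 2*j" "1 \<le> j" "j \<le> d" by blast
        show "x \<in> (\<lambda>j. (q+2*j)*q) ` {1..d}" using j k(2) by auto
      qed
    qed
    thus "card S = d" using injf[of "{1..d}"] by (simp add: card_image)
  qed
  show ?thesis using K S1 S2 S3 mem unfolding S_def by blast
qed

lemma p_props: assumes "n \<ge> 1" shows "prime (p n) \<and> card {r. prime r \<and> r \<le> p n} = n"
  unfolding p_def by (rule LeastI_ex[OF ex_nth[OF assms]])

lemma pi_mono: "a \<le> b \<Longrightarrow> card {r::nat. prime r \<and> r \<le> a} \<le> card {r. prime r \<and> r \<le> b}"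
  by (rule card_mono[OF fin_pr]) auto



lemma p_facts: assumes "n \<ge> 2" shows "odd (p n)" "p n < p (n+1)"
proof -
  have n1: "n \<ge> 1" "n+1 \<ge> 1" using assms by simp_all
  have a: "prime (p n)" "card {r. prime r \<and> r \<le> p n} = n" using p_props[OF n1(1)] by simp_all
  have b: "card {r. prime r \<and> r \<le> p (n+1)} = n+1" using p_props[OF n1(2)] by simp
  show "p n < p (n+1)"
  proof (rule ccontr)
    assume "\<not> p n < p (n+1)"
    hence "p (n+1) \<le> p n" by simp
    hence "card {r. prime r \<and> r \<le> p (n+1)} \<le> card {r. prime r \<and> r \<le> p n}" by (rule pi_mono)
    thus False using a(2) b by linarith
  qed
  have two: "{r::nat. prime r \<and> r \<le> 2} = {2}" by (auto dest: prime_ge_2_nat)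
  have "p n \<noteq> 2"
  proof
    assume h: "p n = 2"
    have "n = card {r. prime r \<and> r \<le> p n}" using a(2) by (rule sym)
    also have "\<dots> = card {r::nat. prime r \<and> r \<le> 2}" unfolding h ..
    also have "\<dots> = 1" unfolding two by simp
    finally show False using assms by linarith
  qed
  hence "p n > 2" using prime_ge_2_nat[OF a(1)] by linarith
  thus "odd (p n)" by (rule prime_odd_nat[OF a(1)])
qed

theorem theorem2p8:
  fixes n :: nat
  assumes "n \<ge> 2" and "n \<noteq> 4"
  shows "((real (d n) < sqrt 2 * sqrt (real (p n))) \<longleftrightarrow>
           ((p (n + 1) + d n) * p n \<in> odd_multiples (p n) \<inter> {..p (n + 1) ^ 2} \<and>
            (\<forall>x \<in> odd_multiples (p n) \<inter> {..p (n + 1) ^ 2}. x \<le> (p (n + 1) + d n) * p n))) \<and>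
         ((real (d n) < sqrt 2 * sqrt (real (p n))) \<longleftrightarrow>
           card (odd_multiples (p n) \<inter> {p n ^ 2 <..< p (n + 1) ^ 2}) = d n) \<and>
         ((real (d n) < sqrt 2 * sqrt (real (p n))) \<longleftrightarrow>
           real (d n) / 2 + (\<Sum>i = 1..d n - 1. real i) < real (p n))"
proof -
  have f: "odd (p n)" "p n < p (n+1)" "odd (p (n+1))"
  proof -
    have "n+1 \<ge> 2" using assms(1) by simp
    thus "odd (p n)" "p n < p (n+1)" "odd (p (n+1))"
      using p_facts[OF assms(1)] p_facts(1)[of "n+1"] by simp_all
  qed
  have dd: "d n = p (n+1) - p n" by (simp add: d_def)
  have P: "p (n+1) = p n + d n" using f(2) dd by simp
  have ed: "even (d n)" using f P by presburger
  have dp: "d n > 0" using f(2) dd by simp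
  show ?thesis unfolding P using arith_main[OF f(1) ed dp] .
qed

end
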